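(* Under the hypotheses of the weak-convergence result for the gossip model with heterogeneous influential environment (constants $\alpha\in[0,1)$, $\omega\in[0,1]$, $\upsilon\in(0,1]$, exponential moment bounds on $\mu_0$ and $\psi$), let $\mu_\infty$ be the weak limit of $\mu_t$ as $t\to\infty$. If $\psi\ll\lambda$, then $\mu_\infty\ll\lambda$.
   Context: $\mathcal X\subseteq\mathbb R^d$ convex open, $\lambda$ Lebesgue measure, $\ll$ absolute continuity. The kernel is $\int\varphi\,d\kappa(\cdot|x,y)=\alpha\varphi((1-\omega)x+\omega y)+(1-\alpha)\int\varphi((1-\upsilon)x+\upsilon z)\,d\psi(z)$ with $\psi\in\mathcal P(\mathcal X)$; the moment bounds are $\sup_k(\int|x|^kd\mu_0)^{1/k}<\infty$ and $\sup_k(\int|x|^kd\psi)^{1/k}<\infty$. $\{\mu_t\}$ is the (unique) weak solution of $\frac{d}{dt}\mu_t=F(\mu_t)-\mu_t$ from $\mu_0$, with $F(\mu)(B)=\int\!\!\int\kappa(B|x,y)d\mu(x)d\mu(y)$; under these hypotheses $\mu_t$ converges weakly to a probability measure $\mu_\infty$. *)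

theory Defs
  imports "HOL-Probability.Probability"
begin

text \<open>Probability measures on the convex open set X, realised as Borel probability
  measures on the ambient Euclidean space that give full mass to X.\<close>
definition prob_on :: "'a::euclidean_space set \<Rightarrow> 'a measure \<Rightarrow> bool" where
  "prob_on X M \<longleftrightarrow> prob_space M \<and> sets M = sets borel \<and> emeasure M X = 1"

text \<open>Test functions: bounded continuous functions on X (any such function extends
  Borel-measurably to the whole space, the extension being irrelevant).\<close>
definition cb_test :: "'a::euclidean_space set \<Rightarrow> ('a \<Rightarrow> real) \<Rightarrow> bool" where
  "cb_test X phi \<longleftrightarrow> phi \<in> borel_measurable borel \<and> continuous_on X phi \<and> bounded (phi ` X)"

definition exp_moment_bounded :: "'a::euclidean_space measure \<Rightarrow> bool" where
  "exp_moment_bounded M \<longleftrightarrow> (\<exists>C::real. \<forall>k::nat. (\<integral>\<^sup>+x. ennreal (norm x ^ k) \<partial>M) \<le> ennreal (C ^ k))"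

text \<open>int phi dF(mu) = int int (int phi dkappa(.|x,y)) dmu(x) dmu(y) for the gossip kernel.\<close>
definition gossip_gain ::
  "real \<Rightarrow> real \<Rightarrow> real \<Rightarrow> 'a::euclidean_space measure \<Rightarrow> ('a \<Rightarrow> real) \<Rightarrow> 'a measure \<Rightarrow> real" where
  "gossip_gain \<alpha> \<omega> \<upsilon> \<psi> phi \<mu> =
     (\<integral>y. (\<integral>x. \<alpha> * phi ((1 - \<omega>) *\<^sub>R x + \<omega> *\<^sub>R y)
               + (1 - \<alpha>) * (\<integral>z. phi ((1 - \<upsilon>) *\<^sub>R x + \<upsilon> *\<^sub>R z) \<partial>\<psi>) \<partial>\<mu>) \<partial>\<mu>)"

text \<open>Weak solution of d/dt mu_t = F(mu_t) - mu_t on [0,inf) (starting from mu 0).\<close>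
definition gossip_weak_solution ::
  "'a::euclidean_space set \<Rightarrow> real \<Rightarrow> real \<Rightarrow> real \<Rightarrow> 'a measure \<Rightarrow> (real \<Rightarrow> 'a measure) \<Rightarrow> bool" where
  "gossip_weak_solution X \<alpha> \<omega> \<upsilon> \<psi> \<mu> \<longleftrightarrow>
     (\<forall>t\<ge>0. prob_on X (\<mu> t)) \<and>
     (\<forall>phi. cb_test X phi \<longrightarrow> (\<forall>t\<ge>0.
        ((\<lambda>s. \<integral>x. phi x \<partial>\<mu> s) has_real_derivative
           (gossip_gain \<alpha> \<omega> \<upsilon> \<psi> phi (\<mu> t) - (\<integral>x. phi x \<partial>\<mu> t))) (at t within {0..})))"

definition weak_conv_at_top :: "'a::euclidean_space set \<Rightarrow> (real \<Rightarrow> 'a measure) \<Rightarrow> 'a measure \<Rightarrow> bool" where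
  "weak_conv_at_top X \<mu> \<nu> \<longleftrightarrow>
     (\<forall>phi. cb_test X phi \<longrightarrow> ((\<lambda>t. \<integral>x. phi x \<partial>\<mu> t) \<longlongrightarrow> (\<integral>x. phi x \<partial>\<nu>)) at_top)"

end

theory Submission
  imports Defs
begin

lemma dc_bounded:
  fixes s :: "nat \<Rightarrow> 'a \<Rightarrow> real"
  assumes fin: "finite_measure M"
    and meas: "\<And>n. s n \<in> borel_measurable M"
    and bd: "\<And>n x. x \<in> space M \<Longrightarrow> \<bar>s n x\<bar> \<le> C"
    and lim: "\<And>x. x \<in> space M \<Longrightarrow> (\<lambda>n. s n x) \<longlonglongrightarrow> f x"
  shows "f \<in> borel_measurable M" "(\<lambda>n. \<integral>x. s n x \<partial>M) \<longlonglongrightarrow> (\<integral>x. f x \<partial>M)"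
proof -
  show fm: "f \<in> borel_measurable M"
    by (rule borel_measurable_LIMSEQ_real[OF lim meas])
  interpret finite_measure M by (rule fin)
  show "(\<lambda>n. \<integral>x. s n x \<partial>M) \<longlonglongrightarrow> (\<integral>x. f x \<partial>M)"
    apply (rule integral_dominated_convergence[where w="\<lambda>_. C"])
    apply (rule fm)
    apply (rule meas)
    apply (rule integrable_const)
    using lim apply (simp add: AE_I2)
    using bd by (simp add: AE_I2)
qed

lemma bm_sets:
  assumes "sets M = sets borel" "f \<in> borel_measurable borel"
  shows "f \<in> borel_measurable M"
  by (subst measurable_cong_sets[OF assms(1) refl]) (rule assms(2))

lemma cont_bm:
  assumes "sets M = sets borel" "continuous_on UNIV f"
  shows "f \<in> borel_measurable M"
  by (rule bm_sets[OF assms(1) borel_measurable_continuous_onI[OF assms(2)]])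

lemma integrable_bd:
  fixes f :: "'a \<Rightarrow> real"
  assumes "prob_space M" "f \<in> borel_measurable M" "\<And>x. x \<in> space M \<Longrightarrow> \<bar>f x\<bar> \<le> B"
  shows "integrable M f"
proof -
  interpret prob_space M by fact
  show ?thesis
    apply (rule integrable_const_bound[where B=B])
     apply (rule AE_I2)
    using assms(3) apply simp
    by (rule assms(2))
qed

lemma integral_abs_le:
  fixes f :: "'a \<Rightarrow> real"
  assumes "prob_space M" "f \<in> borel_measurable M" "\<And>x. x \<in> space M \<Longrightarrow> \<bar>f x\<bar> \<le> B"
  shows "\<bar>\<integral>x. f x \<partial>M\<bar> \<le> B"
proof -
  interpret prob_space M by fact
  have "\<bar>\<integral>x. f x \<partial>M\<bar> \<le> (\<integral>x. \<bar>f x\<bar> \<partial>M)"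
    by (rule integral_abs_bound)
  also have "\<dots> \<le> (\<integral>x. B \<partial>M)"
    using assms by (intro integral_mono integrable_bd[where B=B] integrable_const) auto
  also have "\<dots> = B" by (simp add: prob_space)
  finally show ?thesis .
qed

lemma lip_integral:
  fixes g :: "'b \<Rightarrow> 'a::metric_space \<Rightarrow> real"
  assumes "prob_space M"
    and "\<And>y. (\<lambda>x. g x y) \<in> borel_measurable M"
    and "\<And>x y. x \<in> space M \<Longrightarrow> \<bar>g x y\<bar> \<le> B"
    and "\<And>x y y'. x \<in> space M \<Longrightarrow> \<bar>g x y - g x y'\<bar> \<le> L * dist y y'"
  shows "\<bar>(\<integral>x. g x y \<partial>M) - (\<integral>x. g x y' \<partial>M)\<bar> \<le> L * dist y y'"
proof -
  have i1: "integrable M (\<lambda>x. g x y)" "integrable M (\<lambda>x. g x y')"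
    using assms by (auto intro!: integrable_bd[where B=B])
  have "(\<integral>x. g x y \<partial>M) - (\<integral>x. g x y' \<partial>M) = (\<integral>x. g x y - g x y' \<partial>M)"
    using i1 by simp
  also have "\<bar>\<dots>\<bar> \<le> L * dist y y'"
    using assms by (intro integral_abs_le[where B="L * dist y y'"]) auto
  finally show ?thesis .
qed

lemma cb_of_cont:
  assumes "continuous_on UNIV phi" "\<And>x. \<bar>phi x\<bar> \<le> B"
  shows "cb_test X phi"
  unfolding cb_test_def
proof (intro conjI)
  show "phi \<in> borel_measurable borel" using assms by (intro borel_measurable_continuous_onI) 
  show "continuous_on X phi" using assms continuous_on_subset by blast
  show "bounded (phi ` X)" using assms
    by (auto simp: bounded_iff intro!: exI[of _ B])
qed

lemma lip_cont:
  fixes f :: "'a::metric_space \<Rightarrow> real"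
  assumes "0 \<le> L" "\<And>y y'. \<bar>f y - f y'\<bar> \<le> L * dist y y'"
  shows "continuous_on UNIV f"
  by (rule lipschitz_on_continuous_on[where L=L]) (use assms in \<open>auto simp: lipschitz_on_def dist_real_def\<close>)

definition cutoff :: "real \<Rightarrow> 'a::real_normed_vector \<Rightarrow> real" where
  "cutoff R y = min 1 (max 0 (norm y - R))"

lemma cutoff_cont: "continuous_on UNIV (cutoff R)"
  unfolding cutoff_def by (intro continuous_intros)

lemma cutoff_bd: "0 \<le> cutoff R y" "cutoff R y \<le> 1" "\<bar>cutoff R y\<bar> \<le> 1"
  unfolding cutoff_def by auto

lemma cutoff_out: "R + 1 < norm y \<Longrightarrow> cutoff R y = 1"
  unfolding cutoff_def by auto

lemma cutoff_lim:
  assumes "prob_space Q" "sets Q = sets borel"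
  shows "(\<lambda>n. \<integral>y. cutoff (real n) y \<partial>Q) \<longlonglongrightarrow> 0"
proof -
  interpret prob_space Q by fact
  have "(\<lambda>n. \<integral>y. cutoff (real n) y \<partial>Q) \<longlonglongrightarrow> (\<integral>y. 0 \<partial>Q)"
  proof (rule dc_bounded(2)[where C=1])
    show "finite_measure Q" by (rule finite_measure_axioms)
    show "cutoff (real n) \<in> borel_measurable Q" for n
      using assms(2) cutoff_cont by (rule cont_bm)
    show "\<bar>cutoff (real n) y\<bar> \<le> 1" for n y by (rule cutoff_bd)
    show "(\<lambda>n. cutoff (real n) y) \<longlonglongrightarrow> 0" for y
    proof (rule tendsto_eventually)
      obtain N :: nat where "norm y \<le> real N" using real_arch_simple by blast
      then show "eventually (\<lambda>n. cutoff (real n) y = 0) sequentially"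
        unfolding eventually_sequentially cutoff_def
        by (intro exI[of _ N]) auto
    qed
  qed
  then show ?thesis by simp
qed

lemma pc:
  fixes P :: "real \<Rightarrow> 'a::euclidean_space measure" and Q :: "'a measure"
    and g :: "'a \<Rightarrow> 'a \<Rightarrow> real"
  assumes P: "\<And>t. t \<ge> 0 \<Longrightarrow> prob_space (P t) \<and> sets (P t) = sets borel"
    and Q: "prob_space Q" "sets Q = sets borel"
    and wc: "\<And>(f::'a \<Rightarrow> real) B. continuous_on UNIV f \<Longrightarrow> (\<And>x. \<bar>f x\<bar> \<le> B) \<Longrightarrow>
               ((\<lambda>t. \<integral>x. f x \<partial>P t) \<longlongrightarrow> (\<integral>x. f x \<partial>Q)) at_top"
    and gb: "\<And>x y. \<bar>g x y\<bar> \<le> B"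
    and gc: "\<And>y. continuous_on UNIV (\<lambda>x. g x y)"
    and gl: "\<And>x y y'. \<bar>g x y - g x y'\<bar> \<le> L * dist y y'"
    and L: "0 \<le> L"
  shows "((\<lambda>t. \<integral>y. (\<integral>x. g x y \<partial>P t) \<partial>P t) \<longlongrightarrow> (\<integral>y. (\<integral>x. g x y \<partial>Q) \<partial>Q)) at_top"
proof -
  define Gt where "Gt t y = (\<integral>x. g x y \<partial>P t)" for t y
  define G where "G y = (\<integral>x. g x y \<partial>Q)" for y
  have gm: "(\<lambda>x. g x y) \<in> borel_measurable M" if "sets M = sets borel" for M y
    using that gc by (rule cont_bm)
  have Gtb: "\<bar>Gt t y\<bar> \<le> B" if "t \<ge> 0" for t y
    unfolding Gt_def using P[OF that] gm gb by (intro integral_abs_le) auto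
  have Gtl: "\<bar>Gt t y - Gt t y'\<bar> \<le> L * dist y y'" if "t \<ge> 0" for t y y'
    unfolding Gt_def using P[OF that] gm gb gl by (intro lip_integral) auto
  have Gb: "\<bar>G y\<bar> \<le> B" for y
    unfolding G_def using Q gm gb by (intro integral_abs_le) auto
  have Gl: "\<bar>G y - G y'\<bar> \<le> L * dist y y'" for y y'
    unfolding G_def using Q gm gb gl by (intro lip_integral) auto
  have Gc: "continuous_on UNIV G" using L Gl by (rule lip_cont)
  have Gtc: "continuous_on UNIV (Gt t)" if "t \<ge> 0" for t using L Gtl[OF that] by (rule lip_cont)
  have A: "((\<lambda>t. \<integral>y. G y \<partial>P t) \<longlongrightarrow> (\<integral>y. G y \<partial>Q)) at_top"
    by (rule wc[OF Gc Gb])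
  have Bc: "((\<lambda>t. (\<integral>y. Gt t y \<partial>P t) - (\<integral>y. G y \<partial>P t)) \<longlongrightarrow> 0) at_top"
  proof (rule tendstoI)
    fix e :: real assume e: "e > 0"
    define B' where "B' = \<bar>B\<bar> + 1"
    have B': "B' > 0" "B \<le> B'" unfolding B'_def by auto
    from tendstoD[OF cutoff_lim[OF Q] divide_pos_pos[OF e, of "8 * B'"]] B'
    obtain n where n: "dist (\<integral>y. cutoff (real n) y \<partial>Q) 0 < e / (8 * B')"
      by (auto simp: eventually_sequentially)
    define R where "R = real n"
    have cQ: "(\<integral>y. cutoff R y \<partial>Q) < e / (8 * B')"
      using n unfolding R_def dist_real_def by simp
    have ev1: "eventually (\<lambda>t. (\<integral>y. cutoff R y \<partial>P t) < e / (8 * B')) at_top"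
      using wc[OF cutoff_cont cutoff_bd(3)] cQ by (rule order_tendstoD)
    define \<delta> where "\<delta> = e / (8 * (L + 1))"
    have \<delta>: "\<delta> > 0" "2 * L * \<delta> \<le> e / 4"
      using e L unfolding \<delta>_def by (auto simp: field_simps)
    have "seq_compact (cball (0::'a) (R + 1))" by (simp add: compact_imp_seq_compact)
    from seq_compact_imp_totally_bounded[OF this, rule_format, OF \<delta>(1)]
    obtain F :: "'a set" where F: "finite F" "F \<subseteq> cball 0 (R + 1)" "cball 0 (R + 1) \<subseteq> (\<Union>x\<in>F. ball x \<delta>)"
      by blast
    have ev2: "eventually (\<lambda>t. \<forall>f\<in>F. \<bar>Gt t f - G f\<bar> < e / 4) at_top"
    proof (rule eventually_ball_finite[OF F(1)], intro ballI)
      fix f assume "f \<in> F"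
      have "((\<lambda>t. Gt t f) \<longlongrightarrow> G f) at_top"
        unfolding Gt_def G_def using gc gb by (rule wc)
      from tendstoD[OF this, of "e/4"] e
      show "eventually (\<lambda>t. \<bar>Gt t f - G f\<bar> < e / 4) at_top"
        by (simp add: dist_real_def)
    qed
    have ev3: "eventually (\<lambda>t::real. t \<ge> 0) at_top" by (rule eventually_ge_at_top)
    show "eventually (\<lambda>t. dist ((\<integral>y. Gt t y \<partial>P t) - (\<integral>y. G y \<partial>P t)) 0 < e) at_top"
      using ev1 ev2 ev3
    proof eventually_elim
      case (elim t)
      interpret prob_space "P t" using P[OF elim(3)] by simp
      have sP: "sets (P t) = sets borel" using P[OF elim(3)] by simp
      have pw: "\<bar>Gt t y - G y\<bar> \<le> e / 2 + 2 * B' * cutoff R y" for y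
      proof (cases "norm y \<le> R + 1")
        case True
        then obtain f where f: "f \<in> F" "dist f y < \<delta>" using F(3) by (auto simp: dist_commute)
        have "\<bar>Gt t y - G y\<bar> \<le> \<bar>Gt t y - Gt t f\<bar> + \<bar>Gt t f - G f\<bar> + \<bar>G f - G y\<bar>" by simp
        also have "\<dots> \<le> L * \<delta> + e / 4 + L * \<delta>"
        proof -
          have dd: "L * dist y f \<le> L * \<delta>" "L * dist f y \<le> L * \<delta>"
            using f L by (auto intro!: mult_left_mono simp: dist_commute)
          have "\<bar>Gt t y - Gt t f\<bar> \<le> L * \<delta>"
            using Gtl[OF elim(3), of y f] dd by linarith
          moreover have "\<bar>G f - G y\<bar> \<le> L * \<delta>"
            using Gl[of f y] dd by linarith
          ultimately show ?thesis using elim(2) f by fastforce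
        qed
        also have "\<dots> \<le> e / 2 + 2 * B' * cutoff R y"
        proof -
          have "0 \<le> 2 * B' * cutoff R y" using B' cutoff_bd[of R y] by simp
          then show ?thesis using \<delta> by linarith
        qed
        finally show ?thesis .
      next
        case False
        then have "cutoff R y = 1" by (intro cutoff_out) simp
        moreover have "\<bar>Gt t y - G y\<bar> \<le> \<bar>Gt t y\<bar> + \<bar>G y\<bar>" by (rule abs_triangle_ineq4)
        ultimately show ?thesis using Gtb[OF elim(3), of y] Gb[of y] B' e by simp
      qed
      have iGt: "integrable (P t) (Gt t)"
        by (rule integrable_bd[OF prob_space_axioms cont_bm[OF sP Gtc[OF elim(3)]] Gtb[OF elim(3)]])
      have iG: "integrable (P t) G"
        by (rule integrable_bd[OF prob_space_axioms cont_bm[OF sP Gc] Gb])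
      have ic: "integrable (P t) (cutoff R)"
        by (rule integrable_bd[OF prob_space_axioms cont_bm[OF sP cutoff_cont] cutoff_bd(3)])
      have "\<bar>(\<integral>y. Gt t y \<partial>P t) - (\<integral>y. G y \<partial>P t)\<bar> = \<bar>\<integral>y. Gt t y - G y \<partial>P t\<bar>"
        using iGt iG by simp
      also have "\<dots> \<le> (\<integral>y. \<bar>Gt t y - G y\<bar> \<partial>P t)" by (rule integral_abs_bound)
      also have "\<dots> \<le> (\<integral>y. e / 2 + 2 * B' * cutoff R y \<partial>P t)"
        using iGt iG ic pw by (intro integral_mono) auto
      also have "\<dots> = e / 2 + 2 * B' * (\<integral>y. cutoff R y \<partial>P t)"
        using ic by (simp add: prob_space)
      also have "\<dots> < e / 2 + 2 * B' * (e / (8 * B'))"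
        using mult_strict_left_mono[OF elim(1), of "2 * B'"] B' by simp
      also have "\<dots> < e" using B' e by (simp add: field_simps)
      finally show ?case by (simp add: dist_real_def)
    qed
  qed
  have "((\<lambda>t. ((\<integral>y. Gt t y \<partial>P t) - (\<integral>y. G y \<partial>P t)) + (\<integral>y. G y \<partial>P t)) \<longlongrightarrow> 0 + (\<integral>y. G y \<partial>Q)) at_top"
    by (rule tendsto_add[OF Bc A])
  then show ?thesis unfolding Gt_def G_def by simp
qed

lemma deriv_lim_pos_False:
  fixes f f' :: "real \<Rightarrow> real"
  assumes d: "\<And>t. t \<ge> 0 \<Longrightarrow> (f has_real_derivative f' t) (at t within {0..})"
    and fL: "(f \<longlongrightarrow> L) at_top" and f'c: "(f' \<longlongrightarrow> c) at_top" and c: "c > 0"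
  shows False
proof -
  have "eventually (\<lambda>t. f' t > c / 2) at_top"
    using f'c by (rule order_tendstoD) (use c in simp)
  then obtain T1 where T1: "\<And>t. t \<ge> T1 \<Longrightarrow> f' t > c / 2"
    by (auto simp: eventually_at_top_linorder)
  have "eventually (\<lambda>t. dist (f t) L < 1) at_top"
    using fL by (rule tendstoD) simp
  then obtain T2 where T2: "\<And>t. t \<ge> T2 \<Longrightarrow> dist (f t) L < 1"
    by (auto simp: eventually_at_top_linorder)
  define t1 where "t1 = max (max T1 T2) 0 + 1"
  define t2 where "t2 = t1 + 4 / c"
  have t12: "t1 < t2" "t1 > 0" unfolding t2_def t1_def using c by auto
  have D: "DERIV f x :> f' x" if "t1 \<le> x" "x \<le> t2" for x
  proof -
    have x0: "x > 0" using that t12 by simp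
    have "at x within {0..} = at x"
      by (rule at_within_interior) (use x0 in simp)
    then show ?thesis using d[of x] x0 by simp
  qed
  from MVT2[OF t12(1) D] obtain z where z: "t1 < z" "z < t2" "f t2 - f t1 = (t2 - t1) * f' z"
    by blast
  have "f' z > c / 2" using z T1 unfolding t1_def by simp
  then have "(t2 - t1) * f' z > (4 / c) * (c / 2)"
    using c unfolding t2_def by (simp add: field_simps)
  then have "f t2 - f t1 > 2" using z c by simp
  moreover have "dist (f t1) L < 1" "dist (f t2) L < 1"
    using T2 t12 unfolding t1_def by auto
  ultimately show False by (simp add: dist_real_def)
qed

lemma deriv_lim_zero:
  fixes f f' :: "real \<Rightarrow> real"
  assumes d: "\<And>t. t \<ge> 0 \<Longrightarrow> (f has_real_derivative f' t) (at t within {0..})"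
    and fL: "(f \<longlongrightarrow> L) at_top" and f'c: "(f' \<longlongrightarrow> c) at_top"
  shows "c = 0"
proof (rule ccontr)
  assume "c \<noteq> 0"
  then consider "c > 0" | "c < 0" by linarith
  then show False
  proof cases
    case 1 then show ?thesis using deriv_lim_pos_False[OF d fL f'c] by blast
  next
    case 2
    have d': "((\<lambda>t. - f t) has_real_derivative - f' t) (at t within {0..})" if "t \<ge> 0" for t
      using d[OF that] by (rule DERIV_minus)
    show ?thesis
      using deriv_lim_pos_False[OF d' tendsto_minus[OF fL] tendsto_minus[OF f'c]] 2 by simp
  qed
qed

lemma dist_affine: "dist (a *\<^sub>R x + w) (a *\<^sub>R x' + w) = \<bar>a\<bar> * dist x (x'::'a::real_normed_vector)"
  by (simp add: dist_norm scaleR_diff_right[symmetric])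

lemma dist_affine2: "dist (w + a *\<^sub>R x) (w + a *\<^sub>R x') = \<bar>a\<bar> * dist x (x'::'a::real_normed_vector)"
  by (simp add: dist_norm scaleR_diff_right[symmetric])

lemma convex_comb_bound:
  fixes a p q B :: real
  assumes "0 \<le> a" "a \<le> 1" "\<bar>p\<bar> \<le> B" "\<bar>q\<bar> \<le> B"
  shows "\<bar>a * p + (1 - a) * q\<bar> \<le> B"
proof -
  have "\<bar>a * p + (1 - a) * q\<bar> \<le> a * \<bar>p\<bar> + (1 - a) * \<bar>q\<bar>"
    using assms by (simp add: abs_mult abs_triangle_ineq[THEN order_trans])
  also have "\<dots> \<le> a * B + (1 - a) * B"
    using assms by (intro add_mono mult_left_mono) auto
  finally show ?thesis by (simp add: algebra_simps)
qed

lemma h_lip: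
  fixes phi :: "'a::euclidean_space \<Rightarrow> real"
  assumes psi: "prob_space \<psi>" "sets \<psi> = sets borel"
    and phil: "\<And>a b. \<bar>phi a - phi b\<bar> \<le> L * dist a b" and L: "0 \<le> L"
    and phib: "\<And>a. \<bar>phi a\<bar> \<le> B" and u: "0 \<le> \<upsilon>" "\<upsilon> \<le> 1"
  shows "\<bar>(\<integral>z. phi ((1 - \<upsilon>) *\<^sub>R x + \<upsilon> *\<^sub>R z) \<partial>\<psi>)\<bar> \<le> B"
    "\<bar>(\<integral>z. phi ((1 - \<upsilon>) *\<^sub>R x + \<upsilon> *\<^sub>R z) \<partial>\<psi>) - (\<integral>z. phi ((1 - \<upsilon>) *\<^sub>R x' + \<upsilon> *\<^sub>R z) \<partial>\<psi>)\<bar> \<le> L * dist x x'"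
proof -
  have phic: "continuous_on UNIV phi" using L phil by (rule lip_cont)
  have pm: "(\<lambda>z. phi ((1 - \<upsilon>) *\<^sub>R x + \<upsilon> *\<^sub>R z)) \<in> borel_measurable \<psi>" for x
    using psi(2) by (rule cont_bm) (intro continuous_on_compose2[OF phic] continuous_intros, auto)
  show "\<bar>(\<integral>z. phi ((1 - \<upsilon>) *\<^sub>R x + \<upsilon> *\<^sub>R z) \<partial>\<psi>)\<bar> \<le> B"
    using psi pm phib by (intro integral_abs_le) auto
  have "\<bar>(\<integral>z. phi ((1 - \<upsilon>) *\<^sub>R x + \<upsilon> *\<^sub>R z) \<partial>\<psi>) - (\<integral>z. phi ((1 - \<upsilon>) *\<^sub>R x' + \<upsilon> *\<^sub>R z) \<partial>\<psi>)\<bar>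
      \<le> (L * \<bar>1 - \<upsilon>\<bar>) * dist x x'"
  proof (rule lip_integral[where B=B, OF psi(1) pm])
    show "\<bar>phi ((1 - \<upsilon>) *\<^sub>R y + \<upsilon> *\<^sub>R z)\<bar> \<le> B" for z y by (rule phib)
    show "\<bar>phi ((1 - \<upsilon>) *\<^sub>R y + \<upsilon> *\<^sub>R z) - phi ((1 - \<upsilon>) *\<^sub>R y' + \<upsilon> *\<^sub>R z)\<bar> \<le> (L * \<bar>1 - \<upsilon>\<bar>) * dist y y'" for z y y'
      using phil[of "(1 - \<upsilon>) *\<^sub>R y + \<upsilon> *\<^sub>R z" "(1 - \<upsilon>) *\<^sub>R y' + \<upsilon> *\<^sub>R z"]
      by (simp add: dist_norm scaleR_diff_right[symmetric] mult.assoc)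
  qed
  also have "\<dots> \<le> L * dist x x'"
    using u L by (intro mult_right_mono) (auto simp: mult_left_le)
  finally show "\<bar>(\<integral>z. phi ((1 - \<upsilon>) *\<^sub>R x + \<upsilon> *\<^sub>R z) \<partial>\<psi>) - (\<integral>z. phi ((1 - \<upsilon>) *\<^sub>R x' + \<upsilon> *\<^sub>R z) \<partial>\<psi>)\<bar> \<le> L * dist x x'" .
qed

lemma comb_diff_bound:
  fixes a p q p' q' :: real
  assumes "0 \<le> a" "a \<le> 1"
  shows "\<bar>(a * p + (1 - a) * q) - (a * p' + (1 - a) * q')\<bar> \<le> a * \<bar>p - p'\<bar> + (1 - a) * \<bar>q - q'\<bar>"
proof -
  have "(a * p + (1 - a) * q) - (a * p' + (1 - a) * q') = a * (p - p') + (1 - a) * (q - q')"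
    by (simp add: algebra_simps)
  also have "\<bar>\<dots>\<bar> \<le> \<bar>a * (p - p')\<bar> + \<bar>(1 - a) * (q - q')\<bar>" by (rule abs_triangle_ineq)
  also have "\<dots> = a * \<bar>p - p'\<bar> + (1 - a) * \<bar>q - q'\<bar>" using assms by (simp add: abs_mult)
  finally show ?thesis .
qed

lemma g_props:
  fixes phi :: "'a::euclidean_space \<Rightarrow> real"
  assumes psi: "prob_space \<psi>" "sets \<psi> = sets borel"
    and phil: "\<And>a b. \<bar>phi a - phi b\<bar> \<le> L * dist a b" and L: "0 \<le> L"
    and phib: "\<And>a. \<bar>phi a\<bar> \<le> B" and u: "0 \<le> \<upsilon>" "\<upsilon> \<le> 1"
    and a: "0 \<le> \<alpha>" "\<alpha> \<le> 1" and w: "0 \<le> \<omega>" "\<omega> \<le> 1"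
  shows "\<bar>\<alpha> * phi ((1 - \<omega>) *\<^sub>R x + \<omega> *\<^sub>R y) + (1 - \<alpha>) * (\<integral>z. phi ((1 - \<upsilon>) *\<^sub>R x + \<upsilon> *\<^sub>R z) \<partial>\<psi>)\<bar> \<le> B"
    and "\<bar>(\<alpha> * phi ((1 - \<omega>) *\<^sub>R x + \<omega> *\<^sub>R y) + (1 - \<alpha>) * (\<integral>z. phi ((1 - \<upsilon>) *\<^sub>R x + \<upsilon> *\<^sub>R z) \<partial>\<psi>))
        - (\<alpha> * phi ((1 - \<omega>) *\<^sub>R x + \<omega> *\<^sub>R y') + (1 - \<alpha>) * (\<integral>z. phi ((1 - \<upsilon>) *\<^sub>R x + \<upsilon> *\<^sub>R z) \<partial>\<psi>))\<bar>
        \<le> L * dist y y'"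
    and "\<bar>(\<alpha> * phi ((1 - \<omega>) *\<^sub>R x + \<omega> *\<^sub>R y) + (1 - \<alpha>) * (\<integral>z. phi ((1 - \<upsilon>) *\<^sub>R x + \<upsilon> *\<^sub>R z) \<partial>\<psi>))
        - (\<alpha> * phi ((1 - \<omega>) *\<^sub>R x' + \<omega> *\<^sub>R y) + (1 - \<alpha>) * (\<integral>z. phi ((1 - \<upsilon>) *\<^sub>R x' + \<upsilon> *\<^sub>R z) \<partial>\<psi>))\<bar>
        \<le> L * dist x x'"
proof -
  define h where "h x = (\<integral>z. phi ((1 - \<upsilon>) *\<^sub>R x + \<upsilon> *\<^sub>R z) \<partial>\<psi>)" for x
  have hb: "\<bar>h x\<bar> \<le> B" for x unfolding h_def by (rule h_lip(1)[OF psi phil L phib u])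
  have hl: "\<bar>h x - h x'\<bar> \<le> L * dist x x'" for x x' unfolding h_def by (rule h_lip(2)[OF psi phil L phib u])
  show "\<bar>\<alpha> * phi ((1 - \<omega>) *\<^sub>R x + \<omega> *\<^sub>R y) + (1 - \<alpha>) * (\<integral>z. phi ((1 - \<upsilon>) *\<^sub>R x + \<upsilon> *\<^sub>R z) \<partial>\<psi>)\<bar> \<le> B"
    using convex_comb_bound[OF a phib hb] unfolding h_def .
  have p1: "\<bar>phi ((1 - \<omega>) *\<^sub>R x + \<omega> *\<^sub>R y) - phi ((1 - \<omega>) *\<^sub>R x + \<omega> *\<^sub>R y')\<bar> \<le> L * dist y y'"
  proof -
    have "\<bar>phi ((1 - \<omega>) *\<^sub>R x + \<omega> *\<^sub>R y) - phi ((1 - \<omega>) *\<^sub>R x + \<omega> *\<^sub>R y')\<bar> \<le> L * (\<omega> * dist y y')"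
      using phil[of "(1 - \<omega>) *\<^sub>R x + \<omega> *\<^sub>R y" "(1 - \<omega>) *\<^sub>R x + \<omega> *\<^sub>R y'"] w
      by (simp add: dist_norm scaleR_diff_right[symmetric])
    also have "\<dots> \<le> L * dist y y'" using w L by (intro mult_left_mono) (auto intro: mult_left_le_one_le)
    finally show ?thesis .
  qed
  have "\<bar>(\<alpha> * phi ((1 - \<omega>) *\<^sub>R x + \<omega> *\<^sub>R y) + (1 - \<alpha>) * h x)
        - (\<alpha> * phi ((1 - \<omega>) *\<^sub>R x + \<omega> *\<^sub>R y') + (1 - \<alpha>) * h x)\<bar>
        \<le> \<alpha> * \<bar>phi ((1 - \<omega>) *\<^sub>R x + \<omega> *\<^sub>R y) - phi ((1 - \<omega>) *\<^sub>R x + \<omega> *\<^sub>R y')\<bar> + (1 - \<alpha>) * \<bar>h x - h x\<bar>"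
    by (rule comb_diff_bound[OF a])
  also have "\<dots> \<le> \<alpha> * (L * dist y y') + (1 - \<alpha>) * (L * dist y y')"
    using a p1 L by (intro add_mono mult_left_mono) auto
  also have "\<dots> = L * dist y y'" by (simp add: algebra_simps)
  finally show "\<bar>(\<alpha> * phi ((1 - \<omega>) *\<^sub>R x + \<omega> *\<^sub>R y) + (1 - \<alpha>) * (\<integral>z. phi ((1 - \<upsilon>) *\<^sub>R x + \<upsilon> *\<^sub>R z) \<partial>\<psi>))
        - (\<alpha> * phi ((1 - \<omega>) *\<^sub>R x + \<omega> *\<^sub>R y') + (1 - \<alpha>) * (\<integral>z. phi ((1 - \<upsilon>) *\<^sub>R x + \<upsilon> *\<^sub>R z) \<partial>\<psi>))\<bar>
        \<le> L * dist y y'" unfolding h_def .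
  have p2: "\<bar>phi ((1 - \<omega>) *\<^sub>R x + \<omega> *\<^sub>R y) - phi ((1 - \<omega>) *\<^sub>R x' + \<omega> *\<^sub>R y)\<bar> \<le> L * dist x x'"
  proof -
    have "\<bar>phi ((1 - \<omega>) *\<^sub>R x + \<omega> *\<^sub>R y) - phi ((1 - \<omega>) *\<^sub>R x' + \<omega> *\<^sub>R y)\<bar> \<le> L * (\<bar>1 - \<omega>\<bar> * dist x x')"
      using phil[of "(1 - \<omega>) *\<^sub>R x + \<omega> *\<^sub>R y" "(1 - \<omega>) *\<^sub>R x' + \<omega> *\<^sub>R y"]
      by (simp add: dist_norm scaleR_diff_right[symmetric])
    also have "\<dots> \<le> L * dist x x'" using w L by (intro mult_left_mono) (auto intro: mult_left_le_one_le)
    finally show ?thesis .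
  qed
  have "\<bar>(\<alpha> * phi ((1 - \<omega>) *\<^sub>R x + \<omega> *\<^sub>R y) + (1 - \<alpha>) * h x)
        - (\<alpha> * phi ((1 - \<omega>) *\<^sub>R x' + \<omega> *\<^sub>R y) + (1 - \<alpha>) * h x')\<bar>
        \<le> \<alpha> * \<bar>phi ((1 - \<omega>) *\<^sub>R x + \<omega> *\<^sub>R y) - phi ((1 - \<omega>) *\<^sub>R x' + \<omega> *\<^sub>R y)\<bar> + (1 - \<alpha>) * \<bar>h x - h x'\<bar>"
    by (rule comb_diff_bound[OF a])
  also have "\<dots> \<le> \<alpha> * (L * dist x x') + (1 - \<alpha>) * (L * dist x x')"
    using a p2 hl[of x x'] by (intro add_mono mult_left_mono) auto
  also have "\<dots> = L * dist x x'" by (simp add: algebra_simps)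
  finally show "\<bar>(\<alpha> * phi ((1 - \<omega>) *\<^sub>R x + \<omega> *\<^sub>R y) + (1 - \<alpha>) * (\<integral>z. phi ((1 - \<upsilon>) *\<^sub>R x + \<upsilon> *\<^sub>R z) \<partial>\<psi>))
        - (\<alpha> * phi ((1 - \<omega>) *\<^sub>R x' + \<omega> *\<^sub>R y) + (1 - \<alpha>) * (\<integral>z. phi ((1 - \<upsilon>) *\<^sub>R x' + \<upsilon> *\<^sub>R z) \<partial>\<psi>))\<bar>
        \<le> L * dist x x'" unfolding h_def .
qed

lemma fixed_point:
  fixes X :: "'a::euclidean_space set"
    and \<alpha> \<omega> \<upsilon> :: real
    and \<psi> \<mu>inf :: "'a measure"
    and \<mu> :: "real \<Rightarrow> 'a measure"
    and phi :: "'a \<Rightarrow> real"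
  assumes a: "0 \<le> \<alpha>" "\<alpha> \<le> 1" and w: "0 \<le> \<omega>" "\<omega> \<le> 1" and u: "0 \<le> \<upsilon>" "\<upsilon> \<le> 1"
    and ppsi: "prob_on X \<psi>"
    and ws: "gossip_weak_solution X \<alpha> \<omega> \<upsilon> \<psi> \<mu>"
    and pmu: "prob_on X \<mu>inf" and wcv: "weak_conv_at_top X \<mu> \<mu>inf"
    and phil: "\<And>a b. \<bar>phi a - phi b\<bar> \<le> L * dist a b" and L: "0 \<le> L"
    and phib: "\<And>a. \<bar>phi a\<bar> \<le> B"
  shows "gossip_gain \<alpha> \<omega> \<upsilon> \<psi> phi \<mu>inf = (\<integral>x. phi x \<partial>\<mu>inf)"
proof -
  have wc: "((\<lambda>t. \<integral>x. f x \<partial>\<mu> t) \<longlongrightarrow> (\<integral>x. f x \<partial>\<mu>inf)) at_top"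
    if "continuous_on UNIV f" "\<And>x. \<bar>f x\<bar> \<le> B'" for f :: "'a \<Rightarrow> real" and B'
    using wcv cb_of_cont[OF that] unfolding weak_conv_at_top_def by blast
  have P: "prob_space (\<mu> t) \<and> sets (\<mu> t) = sets borel" if "t \<ge> 0" for t
    using ws that unfolding gossip_weak_solution_def prob_on_def by blast
  have Q: "prob_space \<mu>inf" "sets \<mu>inf = sets borel" using pmu unfolding prob_on_def by auto
  have psi: "prob_space \<psi>" "sets \<psi> = sets borel" using ppsi unfolding prob_on_def by auto
  have phic: "continuous_on UNIV phi" using L phil by (rule lip_cont)
  define g where "g x y = \<alpha> * phi ((1 - \<omega>) *\<^sub>R x + \<omega> *\<^sub>R y) + (1 - \<alpha>) * (\<integral>z. phi ((1 - \<upsilon>) *\<^sub>R x + \<upsilon> *\<^sub>R z) \<partial>\<psi>)" for x y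
  have gain: "gossip_gain \<alpha> \<omega> \<upsilon> \<psi> phi M = (\<integral>y. (\<integral>x. g x y \<partial>M) \<partial>M)" for M
    unfolding gossip_gain_def g_def ..
  note gp = g_props[OF psi phil L phib u a w]
  have gb: "\<bar>g x y\<bar> \<le> B" for x y unfolding g_def by (rule gp(1))
  have gly: "\<bar>g x y - g x y'\<bar> \<le> L * dist y y'" for x y y' unfolding g_def by (rule gp(2))
  have glx: "\<bar>g x y - g x' y\<bar> \<le> L * dist x x'" for x x' y unfolding g_def by (rule gp(3))
  have gc: "continuous_on UNIV (\<lambda>x. g x y)" for y
    using L glx by (rule lip_cont)
  have lim1: "((\<lambda>t. gossip_gain \<alpha> \<omega> \<upsilon> \<psi> phi (\<mu> t)) \<longlongrightarrow> gossip_gain \<alpha> \<omega> \<upsilon> \<psi> phi \<mu>inf) at_top"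
    unfolding gain using P Q wc gb gc gly L by (rule pc)
  have lim2: "((\<lambda>t. \<integral>x. phi x \<partial>\<mu> t) \<longlongrightarrow> (\<integral>x. phi x \<partial>\<mu>inf)) at_top"
    using phic phib by (rule wc)
  have cb: "cb_test X phi" using phic phib by (rule cb_of_cont)
  have d: "((\<lambda>s. \<integral>x. phi x \<partial>\<mu> s) has_real_derivative
           (gossip_gain \<alpha> \<omega> \<upsilon> \<psi> phi (\<mu> t) - (\<integral>x. phi x \<partial>\<mu> t))) (at t within {0..})" if "t \<ge> 0" for t
    using ws cb that unfolding gossip_weak_solution_def by blast
  have "gossip_gain \<alpha> \<omega> \<upsilon> \<psi> phi \<mu>inf - (\<integral>x. phi x \<partial>\<mu>inf) = 0"
    by (rule deriv_lim_zero[OF d lim2 tendsto_diff[OF lim1 lim2]])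
  then show ?thesis by simp
qed

lemma null_affine_image:
  fixes K :: "'a::euclidean_space set"
  assumes K: "compact K" "K \<in> null_sets lborel"
  shows "(\<lambda>x. c *\<^sub>R x + d) ` K \<in> null_sets lborel" "compact ((\<lambda>x. c *\<^sub>R x + d) ` K)"
proof -
  show cK: "compact ((\<lambda>x. c *\<^sub>R x + d) ` K)"
    using K(1) by (intro compact_continuous_image continuous_intros)
  have Kb: "K \<in> sets borel" using K(1) by (simp add: compact_imp_closed)
  have Ib: "(\<lambda>x. c *\<^sub>R x + d) ` K \<in> sets borel" using cK by (simp add: compact_imp_closed)
  have "emeasure lebesgue ((\<lambda>x. c *\<^sub>R x + d) ` K) = \<bar>c\<bar> ^ DIM('a) * emeasure lebesgue K"
    by (rule emeasure_lebesgue_affine)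
  also have "emeasure lebesgue K = 0" using K Kb by (simp add: null_sets_def)
  finally have "emeasure lborel ((\<lambda>x. c *\<^sub>R x + d) ` K) = 0" using Ib by simp
  then show "(\<lambda>x. c *\<^sub>R x + d) ` K \<in> null_sets lborel" using Ib by (simp add: null_sets_def)
qed

lemma preimage_affine:
  fixes K :: "'a::euclidean_space set"
  assumes "c \<noteq> 0"
  shows "{x. c *\<^sub>R x + a \<in> K} = (\<lambda>k. (1/c) *\<^sub>R k + (- (1/c) *\<^sub>R a)) ` K"
proof (intro set_eqI iffI)
  fix x assume "x \<in> {x. c *\<^sub>R x + a \<in> K}"
  then show "x \<in> (\<lambda>k. (1/c) *\<^sub>R k + (- (1/c) *\<^sub>R a)) ` K"
    using assms by (intro image_eqI[of _ _ "c *\<^sub>R x + a"]) (auto simp: algebra_simps)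
next
  fix x assume "x \<in> (\<lambda>k. (1/c) *\<^sub>R k + (- (1/c) *\<^sub>R a)) ` K"
  then obtain k where "k \<in> K" "x = (1/c) *\<^sub>R k + (- (1/c) *\<^sub>R a)" by auto
  moreover have "c *\<^sub>R ((1/c) *\<^sub>R k + (- (1/c) *\<^sub>R a)) + a = k"
    using assms by (simp add: scaleR_add_right scaleR_diff_right)
  ultimately show "x \<in> {x. c *\<^sub>R x + a \<in> K}" by simp
qed

lemma null_preimage:
  fixes K :: "'a::euclidean_space set"
  assumes K: "compact K" "K \<in> null_sets lborel" and c: "c \<noteq> 0"
  shows "{x. c *\<^sub>R x + a \<in> K} \<in> null_sets lborel" "compact {x. c *\<^sub>R x + a \<in> K}"
  unfolding preimage_affine[OF c] by (rule null_affine_image[OF K])+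

lemma null_preimage2:
  fixes K :: "'a::euclidean_space set"
  assumes K: "compact K" "K \<in> null_sets lborel" and c: "c \<noteq> 0"
  shows "{x. a + c *\<^sub>R x \<in> K} \<in> null_sets lborel" "compact {x. a + c *\<^sub>R x \<in> K}"
  using null_preimage[OF K c, of a] by (simp_all add: add.commute)

definition bump :: "'a::metric_space set \<Rightarrow> nat \<Rightarrow> 'a \<Rightarrow> real" where
  "bump K n x = max 0 (1 - real (Suc n) * infdist x K)"

lemma bump_bd: "\<bar>bump K n x\<bar> \<le> 1" "0 \<le> bump K n x"
  unfolding bump_def using infdist_nonneg[of x K] by auto

lemma bump_lip: "\<bar>bump K n a - bump K n b\<bar> \<le> real (Suc n) * dist a b"
proof -
  have "\<bar>bump K n a - bump K n b\<bar> \<le> \<bar>real (Suc n) * infdist a K - real (Suc n) * infdist b K\<bar>"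
    unfolding bump_def by linarith
  also have "\<dots> = real (Suc n) * \<bar>infdist a K - infdist b K\<bar>"
    by (simp add: abs_mult right_diff_distrib[symmetric])
  also have "\<dots> \<le> real (Suc n) * dist a b"
    by (intro mult_left_mono infdist_triangle_abs) auto
  finally show ?thesis .
qed

lemma bump_lim:
  assumes "closed K" "K \<noteq> {}"
  shows "(\<lambda>n. bump K n x) \<longlonglongrightarrow> indicator K x"
proof (cases "x \<in> K")
  case True
  then show ?thesis by (simp add: bump_def)
next
  case False
  then have d: "infdist x K > 0" using assms infdist_pos_not_in_closed by blast
  obtain N :: nat where N: "1 / infdist x K < real N" using reals_Archimedean2 by blast
  show ?thesis
  proof (rule tendsto_eventually)
    show "eventually (\<lambda>n. bump K n x = indicator K x) sequentially"
      unfolding eventually_sequentially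
    proof (intro exI[of _ N] allI impI)
      fix n assume "N \<le> n"
      then have "1 / infdist x K < real (Suc n)" using N by simp
      then have "1 < real (Suc n) * infdist x K" using d by (simp add: field_simps)
      then show "bump K n x = indicator K x" using False by (simp add: bump_def)
    qed
  qed
qed

lemma compact_null_bound:
  fixes \<mu> \<psi> :: "'a::euclidean_space measure" and K :: "'a set"
  assumes FP: "\<And>phi L B. (\<And>a b. \<bar>phi a - phi b\<bar> \<le> L * dist a b) \<Longrightarrow> 0 \<le> L \<Longrightarrow> (\<And>a. \<bar>phi a\<bar> \<le> B)
                 \<Longrightarrow> gossip_gain \<alpha> \<omega> \<upsilon> \<psi> phi \<mu> = (\<integral>x. phi x \<partial>\<mu>)"
    and mu: "prob_space \<mu>" "sets \<mu> = sets borel"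
    and psi: "prob_space \<psi>" "sets \<psi> = sets borel" and ac: "absolutely_continuous lborel \<psi>"
    and a: "0 \<le> \<alpha>" "\<alpha> \<le> 1" and w: "0 \<le> \<omega>" "\<omega> \<le> 1" and u: "0 < \<upsilon>" "\<upsilon> \<le> 1"
    and K: "compact K" "K \<in> null_sets lborel"
    and M: "\<And>K'. compact K' \<Longrightarrow> K' \<in> null_sets lborel \<Longrightarrow> measure \<mu> K' \<le> M"
  shows "measure \<mu> K \<le> \<alpha> * M"
proof -
  interpret mu: prob_space \<mu> by (rule mu)
  interpret psi: prob_space \<psi> by (rule psi)
  have spmu: "space \<mu> = UNIV" using mu(2) by (metis sets_eq_imp_space_eq space_borel)
  have sppsi: "space \<psi> = UNIV" using psi(2) by (metis sets_eq_imp_space_eq space_borel)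
  have M0: "0 \<le> M" using M[of "{}"] by simp
  show ?thesis
  proof (cases "K = {}")
    case True
    then show ?thesis using M0 a by simp
  next
    case Kne: False
    have Kc: "closed K" using K(1) by (rule compact_imp_closed)
    define phi where "phi n = bump K n" for n
    define H where "H n x = (\<integral>z. phi n ((1 - \<upsilon>) *\<^sub>R x + \<upsilon> *\<^sub>R z) \<partial>\<psi>)" for n x
    define g where "g n x y = \<alpha> * phi n ((1 - \<omega>) *\<^sub>R x + \<omega> *\<^sub>R y) + (1 - \<alpha>) * H n x" for n x y
    define I where "I n y = (\<integral>x. g n x y \<partial>\<mu>)" for n y
    have phil: "\<bar>phi n a - phi n b\<bar> \<le> real (Suc n) * dist a b" for n a b
      unfolding phi_def by (rule bump_lip)
    have phib: "\<bar>phi n a\<bar> \<le> 1" for n a unfolding phi_def by (rule bump_bd)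
    have phic: "continuous_on UNIV (phi n)" for n
      using _ phil by (rule lip_cont) simp
    have Hb: "\<bar>H n x\<bar> \<le> 1" for n x
      unfolding H_def using u by (intro h_lip(1)[OF psi phil _ phib]) auto
    have Hl: "\<bar>H n x - H n x'\<bar> \<le> real (Suc n) * dist x x'" for n x x'
      unfolding H_def using u by (intro h_lip(2)[OF psi phil _ phib]) auto
    have gb: "\<bar>g n x y\<bar> \<le> 1" for n x y
      unfolding g_def H_def by (rule g_props(1)[OF psi phil _ phib _ _ a w]) (use u in auto)
    have gly: "\<bar>g n x y - g n x y'\<bar> \<le> real (Suc n) * dist y y'" for n x y y'
      unfolding g_def H_def by (rule g_props(2)[OF psi phil _ phib _ _ a w]) (use u in auto)
    have glx: "\<bar>g n x y - g n x' y\<bar> \<le> real (Suc n) * dist x x'" for n x x' y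
      unfolding g_def H_def by (rule g_props(3)[OF psi phil _ phib _ _ a w]) (use u in auto)
    have gm: "(\<lambda>x. g n x y) \<in> borel_measurable \<mu>" for n y
      using mu(2) by (rule cont_bm) (rule lip_cont[OF _ glx], simp)
    have Il: "\<bar>I n y - I n y'\<bar> \<le> real (Suc n) * dist y y'" for n y y'
      unfolding I_def using mu(1) gm gb gly by (rule lip_integral)
    have Ib: "\<bar>I n y\<bar> \<le> 1" for n y
      unfolding I_def using mu(1) gm gb by (intro integral_abs_le) auto
    have Im: "I n \<in> borel_measurable \<mu>" for n
      using mu(2) by (rule cont_bm) (rule lip_cont[OF _ Il], simp)
    have eq: "(\<integral>x. phi n x \<partial>\<mu>) = (\<integral>y. I n y \<partial>\<mu>)" for n
      using FP[of "phi n" "real (Suc n)" 1, OF phil _ phib]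
      unfolding gossip_gain_def I_def g_def H_def by simp
    have LZ: "(\<lambda>n. H n x) \<longlonglongrightarrow> 0" for x
    proof -
      define S where "S = {z. (1 - \<upsilon>) *\<^sub>R x + \<upsilon> *\<^sub>R z \<in> K}"
      have Snull: "S \<in> null_sets lborel" "compact S"
        unfolding S_def using null_preimage2[OF K, of \<upsilon> "(1 - \<upsilon>) *\<^sub>R x"] u by auto
      have Sp: "S \<in> null_sets \<psi>" using ac Snull(1) unfolding absolutely_continuous_def by auto
      have "(\<lambda>n. H n x) \<longlonglongrightarrow> (\<integral>z. indicator K ((1 - \<upsilon>) *\<^sub>R x + \<upsilon> *\<^sub>R z) \<partial>\<psi>)"
        unfolding H_def
      proof (rule dc_bounded(2)[where C=1])
        show "finite_measure \<psi>" by (rule psi.finite_measure_axioms)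
        show "(\<lambda>z. phi n ((1 - \<upsilon>) *\<^sub>R x + \<upsilon> *\<^sub>R z)) \<in> borel_measurable \<psi>" for n
          using psi(2) by (rule cont_bm) (intro continuous_on_compose2[OF phic] continuous_intros, auto)
        show "\<bar>phi n ((1 - \<upsilon>) *\<^sub>R x + \<upsilon> *\<^sub>R z)\<bar> \<le> 1" for n z by (rule phib)
        show "(\<lambda>n. phi n ((1 - \<upsilon>) *\<^sub>R x + \<upsilon> *\<^sub>R z)) \<longlonglongrightarrow> indicator K ((1 - \<upsilon>) *\<^sub>R x + \<upsilon> *\<^sub>R z)" for z
          unfolding phi_def by (rule bump_lim[OF Kc Kne])
      qed
      also have "(\<integral>z. indicator K ((1 - \<upsilon>) *\<^sub>R x + \<upsilon> *\<^sub>R z) \<partial>\<psi>) = (\<integral>z. indicator S z \<partial>\<psi>)"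
        unfolding S_def by (simp add: indicator_def)
      also have "\<dots> = measure \<psi> S" using sppsi by (simp add: integral_indicator)
      also have "\<dots> = 0" using null_setsD1[OF Sp] by (simp add: measure_def)
      finally show ?thesis .
    qed
    define J where "J y = (\<integral>x. \<alpha> * indicator K ((1 - \<omega>) *\<^sub>R x + \<omega> *\<^sub>R y) + (1 - \<alpha>) * 0 \<partial>\<mu>)" for y
    have LX: "(\<lambda>n. I n y) \<longlonglongrightarrow> J y" for y
      unfolding I_def J_def
    proof (rule dc_bounded(2)[where C=1])
      show "finite_measure \<mu>" by (rule mu.finite_measure_axioms)
      show "(\<lambda>x. g n x y) \<in> borel_measurable \<mu>" for n by (rule gm)
      show "\<bar>g n x y\<bar> \<le> 1" for n x by (rule gb)
      show "(\<lambda>n. g n x y) \<longlonglongrightarrow> \<alpha> * indicator K ((1 - \<omega>) *\<^sub>R x + \<omega> *\<^sub>R y) + (1 - \<alpha>) * 0" for x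
        unfolding g_def
        by (intro tendsto_add tendsto_mult_left LZ) (unfold phi_def, rule bump_lim[OF Kc Kne])
    qed
    have LY: "J \<in> borel_measurable \<mu>" "(\<lambda>n. \<integral>y. I n y \<partial>\<mu>) \<longlonglongrightarrow> (\<integral>y. J y \<partial>\<mu>)"
      using dc_bounded[OF mu.finite_measure_axioms Im Ib LX] by auto
    have LL: "(\<lambda>n. \<integral>x. phi n x \<partial>\<mu>) \<longlonglongrightarrow> (\<integral>x. indicator K x \<partial>\<mu>)"
    proof (rule dc_bounded(2)[where C=1])
      show "finite_measure \<mu>" by (rule mu.finite_measure_axioms)
      show "phi n \<in> borel_measurable \<mu>" for n using mu(2) phic by (rule cont_bm)
      show "\<bar>phi n x\<bar> \<le> 1" for n x by (rule phib)
      show "(\<lambda>n. phi n x) \<longlonglongrightarrow> indicator K x" for x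
        unfolding phi_def by (rule bump_lim[OF Kc Kne])
    qed
    have main: "measure \<mu> K = (\<integral>y. J y \<partial>\<mu>)"
    proof -
      have "(\<lambda>n. \<integral>x. phi n x \<partial>\<mu>) \<longlonglongrightarrow> (\<integral>y. J y \<partial>\<mu>)" using LY(2) by (simp add: eq)
      with LL have "(\<integral>x. indicator K x \<partial>\<mu>) = (\<integral>y. J y \<partial>\<mu>)" by (rule LIMSEQ_unique)
      then show ?thesis using spmu by simp
    qed
    have Jeq: "J y = \<alpha> * measure \<mu> {x. (1 - \<omega>) *\<^sub>R x + \<omega> *\<^sub>R y \<in> K}" for y
    proof -
      have "J y = (\<integral>x. \<alpha> * indicator {x. (1 - \<omega>) *\<^sub>R x + \<omega> *\<^sub>R y \<in> K} x \<partial>\<mu>)"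
        unfolding J_def by (simp add: indicator_def)
      also have "\<dots> = \<alpha> * measure \<mu> {x. (1 - \<omega>) *\<^sub>R x + \<omega> *\<^sub>R y \<in> K}"
        using spmu by simp
      finally show ?thesis .
    qed
    have Jb: "\<bar>J y\<bar> \<le> 1" for y
      unfolding Jeq using a mu.prob_le_1 by (simp add: abs_mult mult_le_one)
    have Ji: "integrable \<mu> J" using mu(1) LY(1) Jb by (rule integrable_bd)
    show ?thesis
    proof (cases "\<omega> = 1")
      case True
      have "J y = \<alpha> * indicator K y" for y
        unfolding Jeq True using spmu mu.prob_space by (simp add: indicator_def)
      then have "(\<integral>y. J y \<partial>\<mu>) = \<alpha> * measure \<mu> K" using spmu by simp
      then have "measure \<mu> K = \<alpha> * measure \<mu> K" using main by simp
      also have "\<dots> \<le> \<alpha> * M" using M[OF K] a by (intro mult_left_mono) auto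
      finally show ?thesis .
    next
      case False
      have "J y \<le> \<alpha> * M" for y
        unfolding Jeq using a w False
        by (intro mult_left_mono M null_preimage[OF K]) auto
      then have "(\<integral>y. J y \<partial>\<mu>) \<le> (\<integral>y. \<alpha> * M \<partial>\<mu>)"
        using Ji by (intro integral_mono) auto
      then show ?thesis using main by (simp add: mu.prob_space)
    qed
  qed
qed


theorem proposition4p3:
  fixes X :: "'a::euclidean_space set"
    and \<alpha> \<omega> \<upsilon> :: real
    and \<psi> \<mu>inf :: "'a measure"
    and \<mu> :: "real \<Rightarrow> 'a measure"
  assumes "convex X" and "open X"
    and "0 \<le> \<alpha>" and "\<alpha> < 1" and "0 \<le> \<omega>" and "\<omega> \<le> 1" and "0 < \<upsilon>" and "\<upsilon> \<le> 1"
    and "prob_on X \<psi>"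
    and "exp_moment_bounded (\<mu> 0)" and "exp_moment_bounded \<psi>"
    and "gossip_weak_solution X \<alpha> \<omega> \<upsilon> \<psi> \<mu>"
    and "prob_on X \<mu>inf" and "weak_conv_at_top X \<mu> \<mu>inf"
    and "absolutely_continuous lborel \<psi>"
  shows "absolutely_continuous lborel \<mu>inf"
proof -
  have a: "0 \<le> \<alpha>" "\<alpha> \<le> 1" using assms(3,4) by auto
  have w: "0 \<le> \<omega>" "\<omega> \<le> 1" using assms(5,6) by auto
  have u: "0 < \<upsilon>" "\<upsilon> \<le> 1" using assms(7,8) by auto
  have mu: "prob_space \<mu>inf" "sets \<mu>inf = sets borel" using assms(13) unfolding prob_on_def by auto
  have psi: "prob_space \<psi>" "sets \<psi> = sets borel" using assms(9) unfolding prob_on_def by auto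
  interpret mu: prob_space \<mu>inf by (rule mu(1))
  have FP: "gossip_gain \<alpha> \<omega> \<upsilon> \<psi> phi \<mu>inf = (\<integral>x. phi x \<partial>\<mu>inf)"
    if "\<And>a b. \<bar>phi a - phi b\<bar> \<le> L * dist a b" "0 \<le> L" "\<And>a. \<bar>phi a\<bar> \<le> B" for phi L B
    by (rule fixed_point[OF a w less_imp_le[OF u(1)] u(2) assms(9,12,13,14) that])
  define S where "S = {measure \<mu>inf K | K. compact K \<and> K \<in> null_sets lborel}"
  define M where "M = Sup S"
  have Sne: "S \<noteq> {}" unfolding S_def by (auto intro!: exI[of _ "{}"])
  have Sbdd: "bdd_above S" unfolding S_def by (auto intro!: bdd_aboveI[of _ 1] mu.prob_le_1)
  have Mup: "measure \<mu>inf K \<le> M" if "compact K" "K \<in> null_sets lborel" for K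
    unfolding M_def using that Sbdd by (intro cSup_upper) (auto simp: S_def)
  have Mal: "measure \<mu>inf K \<le> \<alpha> * M" if "compact K" "K \<in> null_sets lborel" for K
    by (rule compact_null_bound[OF FP mu psi assms(15) a w u that Mup]) auto
  have "M \<le> \<alpha> * M" unfolding M_def
  proof (rule cSup_least[OF Sne])
    fix x assume "x \<in> S"
    then obtain K where "x = measure \<mu>inf K" "compact K" "K \<in> null_sets lborel" by (auto simp: S_def)
    then show "x \<le> \<alpha> * Sup S" using Mal[unfolded M_def] by simp
  qed
  moreover have "0 \<le> M" using Mup[of "{}"] by simp
  ultimately have M0: "M = 0" using assms(4) by (smt (verit) mult_le_cancel_right1)
  have K0: "emeasure \<mu>inf K = 0" if "compact K" "K \<in> null_sets lborel" for K
    using Mup[OF that] M0 mu.emeasure_eq_measure[of K] measure_nonneg[of \<mu>inf K] by simp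
  show ?thesis unfolding absolutely_continuous_def
  proof
    fix N :: "'a set" assume N: "N \<in> null_sets lborel"
    have Nb: "N \<in> sets borel" using null_setsD2[OF N] by simp
    have "emeasure \<mu>inf N = (SUP K \<in> {K. K \<subseteq> N \<and> compact K}. emeasure \<mu>inf K)"
      by (rule inner_regular[OF mu(2) _ Nb]) simp
    also have "\<dots> = 0"
    proof (rule antisym)
      show "(SUP K \<in> {K. K \<subseteq> N \<and> compact K}. emeasure \<mu>inf K) \<le> 0"
      proof (rule SUP_least)
        fix K assume K: "K \<in> {K. K \<subseteq> N \<and> compact K}"
        then have Kc: "compact K" "K \<subseteq> N" by auto
        have "K \<in> sets lborel" using borel_closed[OF compact_imp_closed[OF Kc(1)]] by simp
        then have "K \<in> null_sets lborel" by (rule null_sets_subset[OF N _ Kc(2)])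
        then show "emeasure \<mu>inf K \<le> 0" using K0[OF Kc(1)] by simp
      qed
    qed simp
    finally show "N \<in> null_sets \<mu>inf" using Nb mu(2) by (simp add: null_sets_def)
  qed
qed

end
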